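(* Every finitely generated free partially commutative monoid is isomorphic to an automaton semigroup.
   Context: A free partially commutative monoid is a monoid with presentation $\langle X\mid R\rangle$, $X=\{x_1,\dots,x_n\}$ finite, where $R\subseteq\{(x_ix_j,x_jx_i)\}$. A synchronous automaton is $(Q,\Sigma,t,o)$ with $Q$ a finite set of states, $\Sigma$ a finite alphabet, $t:Q\times\Sigma\to Q$ and $o:Q\times\Sigma\to\Sigma$. Each state $q$ induces $q:\Sigma^*\to\Sigma^*$ by $q(\emptyset)=\emptyset$, $q(\sigma w)=o(q,\sigma)\,q'(w)$ with $q'=t(q,\sigma)$. An automaton semigroup is the semigroup of maps $\Sigma^*\to\Sigma^*$ generated under composition by the states of a synchronous automaton. *)

theory Defs
  imports Main "HOL-Library.FuncSet"
begin

(* Free partially commutative monoid <X | R>: words over X modulo the congruence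
   generated by the relations x_i x_j = x_j x_i for (x_i, x_j) in R. *)
inductive trace_step :: "('a \<times> 'a) set \<Rightarrow> 'a list \<Rightarrow> 'a list \<Rightarrow> bool"
  for R where
  swap: "(a, b) \<in> R \<Longrightarrow> trace_step R (u @ [a, b] @ v) (u @ [b, a] @ v)"

definition trace_equiv :: "('a \<times> 'a) set \<Rightarrow> 'a list \<Rightarrow> 'a list \<Rightarrow> bool" where
  "trace_equiv R = equivclp (trace_step R)"

definition is_automaton ::
  "nat set \<Rightarrow> nat set \<Rightarrow> (nat \<Rightarrow> nat \<Rightarrow> nat) \<Rightarrow> (nat \<Rightarrow> nat \<Rightarrow> nat) \<Rightarrow> bool" where
  "is_automaton Q Sig t out \<longleftrightarrow> finite Q \<and> finite Sig \<and>
     (\<forall>q\<in>Q. \<forall>s\<in>Sig. t q s \<in> Q \<and> out q s \<in> Sig)"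

fun state_map :: "(nat \<Rightarrow> nat \<Rightarrow> nat) \<Rightarrow> (nat \<Rightarrow> nat \<Rightarrow> nat) \<Rightarrow> nat \<Rightarrow> nat list \<Rightarrow> nat list" where
  "state_map t out q [] = []"
| "state_map t out q (s # w) = out q s # state_map t out (t q s) w"

definition state_fun :: "nat set \<Rightarrow> (nat \<Rightarrow> nat \<Rightarrow> nat) \<Rightarrow> (nat \<Rightarrow> nat \<Rightarrow> nat) \<Rightarrow> nat \<Rightarrow> nat list \<Rightarrow> nat list" where
  "state_fun Sig t out q = restrict (state_map t out q) (lists Sig)"

inductive_set automaton_semigroup ::
  "nat set \<Rightarrow> nat set \<Rightarrow> (nat \<Rightarrow> nat \<Rightarrow> nat) \<Rightarrow> (nat \<Rightarrow> nat \<Rightarrow> nat) \<Rightarrow> (nat list \<Rightarrow> nat list) set"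
  for Q Sig t out where
  gen: "q \<in> Q \<Longrightarrow> state_fun Sig t out q \<in> automaton_semigroup Q Sig t out"
| comp: "f \<in> automaton_semigroup Q Sig t out \<Longrightarrow> g \<in> automaton_semigroup Q Sig t out \<Longrightarrow>
         compose (lists Sig) f g \<in> automaton_semigroup Q Sig t out"

(* phi induces an isomorphism from <X | R> (words over X mod trace_equiv R, concatenation)
   onto the semigroup S with operation mult *)
definition is_fpcm_iso ::
  "'a set \<Rightarrow> ('a \<times> 'a) set \<Rightarrow> 'b set \<Rightarrow> ('b \<Rightarrow> 'b \<Rightarrow> 'b) \<Rightarrow> ('a list \<Rightarrow> 'b) \<Rightarrow> bool" where
  "is_fpcm_iso X R S mult phi \<longleftrightarrow>
     phi ` lists X = S \<and>
     (\<forall>u\<in>lists X. \<forall>v\<in>lists X. phi u = phi v \<longleftrightarrow> trace_equiv R u v) \<and>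
     (\<forall>u\<in>lists X. \<forall>v\<in>lists X. phi (u @ v) = mult (phi u) (phi v))"

end

theory Submission
  imports Defs
begin

section \<open>Trace equivalence lemmas\<close>

lemma trace_step_length: "trace_step R u v \<Longrightarrow> length u = length v"
  by (induction rule: trace_step.induct) auto

lemma trace_equiv_length: "trace_equiv R u v \<Longrightarrow> length u = length v"
  unfolding trace_equiv_def
  by (induction rule: equivclp_induct) (auto dest: trace_step_length)

lemma trace_step_cong: "trace_step R u v \<Longrightarrow> trace_step R (p @ u @ q) (p @ v @ q)"
proof (induction rule: trace_step.induct)
  case (swap a b u v)
  have "trace_step R ((p @ u) @ [a, b] @ (v @ q)) ((p @ u) @ [b, a] @ (v @ q))"
    using swap by (rule trace_step.swap)
  then show ?case by simp
qed

lemma trace_equiv_cong: "trace_equiv R u v \<Longrightarrow> trace_equiv R (p @ u @ q) (p @ v @ q)"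
  unfolding trace_equiv_def
proof (induction rule: equivclp_induct)
  case base
  then show ?case by simp
next
  case (step y z)
  then show ?case
    by (meson equivclp_into_equivclp trace_step_cong)
qed

lemma trace_equiv_swap:
  assumes "(a, b) \<in> R \<or> (b, a) \<in> R"
  shows "trace_equiv R (p @ [a, b] @ q) (p @ [b, a] @ q)"
  using assms unfolding trace_equiv_def
  by (meson converse_r_into_equivclp r_into_equivclp trace_step.swap)

lemma trace_equiv_trans: "trace_equiv R a b \<Longrightarrow> trace_equiv R b c \<Longrightarrow> trace_equiv R a c"
  unfolding trace_equiv_def by (rule equivclp_trans)

lemma trace_equiv_sym: "trace_equiv R a b \<Longrightarrow> trace_equiv R b a"
  unfolding trace_equiv_def by (rule equivclp_sym)

lemma trace_equiv_refl: "trace_equiv R a a"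
  unfolding trace_equiv_def by simp

lemma trace_equiv_move:
  assumes "\<forall>y\<in>set u. (x, y) \<in> R \<or> (y, x) \<in> R"
  shows "trace_equiv R (x # u) (u @ [x])"
  using assms
proof (induction u)
  case Nil
  then show ?case by (simp add: trace_equiv_refl)
next
  case (Cons y u)
  have 1: "trace_equiv R (x # y # u) (y # x # u)"
    using trace_equiv_swap[of x y R "[]" u] Cons.prems by simp
  have "trace_equiv R ([y] @ (x # u) @ []) ([y] @ (u @ [x]) @ [])"
    using Cons by (intro trace_equiv_cong) auto
  then show ?case using 1 by (auto intro: trace_equiv_trans)
qed

lemma set_bit_comm: "set_bit i (set_bit j (c::nat)) = set_bit j (set_bit i c)"
  by (rule bit_eqI) (auto simp: bit_set_bit_iff)

lemma state_map_0:
  assumes "\<And>s. t 0 s = 0" "\<And>s. out 0 s = s"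
  shows "state_map t out 0 w = w"
  by (induction w) (auto simp: assms)

lemma state_map_length: "length (state_map t out q w) = length w"
  by (induction w arbitrary: q) auto

locale cfg_setup =
  fixes X :: "'a set" and R :: "('a \<times> 'a) set" and h :: "'a \<Rightarrow> nat" and N :: nat
    and xs0 :: "'a list"
  assumes bij: "bij_betw h X {0..<N}" and RX: "R \<subseteq> X \<times> X"
    and xs0: "set xs0 = X" "distinct xs0"
begin

definition dep :: "'a \<Rightarrow> 'a \<Rightarrow> bool" where
  "dep x y \<longleftrightarrow> x = y \<or> ((x, y) \<notin> R \<and> (y, x) \<notin> R)"

definition hit :: "'a \<Rightarrow> nat \<Rightarrow> bool" where
  "hit x c \<longleftrightarrow> (\<exists>y\<in>X. dep x y \<and> (bit c (h y) \<or> bit c (N + h y)))"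

definition g :: "nat \<Rightarrow> 'a" where "g q = inv_into X h (q - 1)"

definition tA :: "nat \<Rightarrow> nat \<Rightarrow> nat" where
  "tA q c = (if q = 0 then 0 else if hit (g q) c then q else 0)"

definition oA :: "nat \<Rightarrow> nat \<Rightarrow> nat" where
  "oA q c = (if q = 0 then c else if hit (g q) c then set_bit (N + h (g q)) c
             else set_bit (h (g q)) c)"

definition act :: "'a \<Rightarrow> nat list \<Rightarrow> nat list" where
  "act x = state_map tA oA (Suc (h x))"

definition Sig :: "nat set" where "Sig = {..<2 ^ (2 * N)}"

lemma inj: "inj_on h X" using bij by (simp add: bij_betw_def)
lemma hlt: "x \<in> X \<Longrightarrow> h x < N" using bij by (auto simp: bij_betw_def)

lemma g_h: "x \<in> X \<Longrightarrow> g (Suc (h x)) = x"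
  unfolding g_def using inj by simp

lemma g_in: "0 < q \<Longrightarrow> q \<le> N \<Longrightarrow> g q \<in> X \<and> Suc (h (g q)) = q"
proof -
  assume "0 < q" "q \<le> N"
  then have "q - 1 \<in> h ` X" using bij by (auto simp: bij_betw_def)
  then show ?thesis unfolding g_def
    using \<open>0 < q\<close> by (auto simp: inv_into_into f_inv_into_f)
qed

lemma state_map_tA0: "state_map tA oA 0 w = w"
  by (rule state_map_0) (auto simp: tA_def oA_def)

lemma act_Cons: "x \<in> X \<Longrightarrow> act x (c # w) =
  (if hit x c then set_bit (N + h x) c # act x w else set_bit (h x) c # w)"
  by (simp add: act_def tA_def oA_def g_h state_map_tA0)

lemma act_Nil: "act x [] = []" by (simp add: act_def)

lemma act_length: "length (act x w) = length w"
  by (simp add: act_def state_map_length)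

lemma hit_set_bit:
  assumes "a \<in> X" "b \<in> X" "\<not> dep a b"
  shows "hit a (set_bit (h b) c) = hit a c" "hit a (set_bit (N + h b) c) = hit a c"
proof -
  have *: "y \<in> X \<Longrightarrow> dep a y \<Longrightarrow> h y \<noteq> h b \<and> h y \<noteq> N + h b \<and> N + h y \<noteq> h b \<and> N + h y \<noteq> N + h b" for y
    using assms hlt[of y] hlt[of b] inj_onD[OF inj, of y b] by auto
  have e1: "bit (set_bit (h b) c) (h y) = bit c (h y) \<and> bit (set_bit (h b) c) (N + h y) = bit c (N + h y)
     \<and> bit (set_bit (N + h b) c) (h y) = bit c (h y) \<and> bit (set_bit (N + h b) c) (N + h y) = bit c (N + h y)"
    if "y \<in> X" "dep a y" for y
    using *[OF that] unfolding bit_set_bit_iff by metis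
  show "hit a (set_bit (h b) c) = hit a c" "hit a (set_bit (N + h b) c) = hit a c"
    unfolding hit_def by (rule bex_cong[OF refl], use e1 in blast)+
qed

lemma act_comm:
  assumes "(a, b) \<in> R"
  shows "act a (act b w) = act b (act a w)"
proof (cases "a = b")
  case True then show ?thesis by simp
next
  case False
  have ab: "a \<in> X" "b \<in> X" using assms RX by auto
  have nd: "\<not> dep a b" "\<not> dep b a" using assms False by (auto simp: dep_def)
  note hs = hit_set_bit[OF ab nd(1)] hit_set_bit[OF ab(2,1) nd(2)]
  show ?thesis
  proof (induction w)
    case Nil then show ?case by (simp add: act_Nil)
  next
    case (Cons c w)
    then show ?case using ab by (auto simp: act_Cons hs set_bit_comm)
  qed
qed

lemma Sig_set_bit: "c \<in> Sig \<Longrightarrow> i < 2 * N \<Longrightarrow> set_bit i c \<in> Sig"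
  unfolding Sig_def
  by (simp add: take_bit_nat_eq_self_iff[symmetric] take_bit_set_bit_eq)

lemma act_Sig: "x \<in> X \<Longrightarrow> w \<in> lists Sig \<Longrightarrow> act x w \<in> lists Sig"
proof (induction w)
  case Nil then show ?case by (simp add: act_Nil)
next
  case (Cons c w)
  then show ?case using hlt[of x] by (auto simp: act_Cons intro!: Sig_set_bit)
qed

lemma foldr_act_Sig: "u \<in> lists X \<Longrightarrow> w \<in> lists Sig \<Longrightarrow> foldr act u w \<in> lists Sig"
  by (induction u) (auto simp: act_Sig)

lemma foldr_act_step: "trace_step R u v \<Longrightarrow> foldr act u = foldr act v"
proof (induction rule: trace_step.induct)
  case (swap a b u v)
  then show ?case by (auto simp: fun_eq_iff act_comm[OF swap])
qed

lemma foldr_act_equiv: "trace_equiv R u v \<Longrightarrow> foldr act u = foldr act v"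
  unfolding trace_equiv_def
  by (induction rule: equivclp_induct) (auto dest: foldr_act_step)

section \<open>Decoding\<close>

definition layer :: "nat \<Rightarrow> 'a list" where
  "layer c = filter (\<lambda>y. bit c (h y)) xs0"

definition dec :: "nat list \<Rightarrow> 'a list" where
  "dec cfg = concat (rev (map layer cfg))"

definition elems :: "nat list \<Rightarrow> 'a set" where
  "elems s = {y \<in> X. \<exists>d\<in>set s. bit d (h y)}"

fun good :: "nat list \<Rightarrow> bool" where
  "good [] = True"
| "good (c # s) \<longleftrightarrow> good s \<and> (\<forall>y\<in>X. bit c (N + h y) \<longleftrightarrow> y \<in> elems s) \<and>
     ((\<forall>y\<in>X. \<not> bit c (h y)) \<longrightarrow> elems s = {})"

lemma set_layer: "set (layer c) = {y \<in> X. bit c (h y)}"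
  unfolding layer_def using xs0 by auto

lemma set_dec: "set (dec s) = elems s"
  unfolding dec_def elems_def by (auto simp: set_layer)

lemma dec_simps: "dec [] = []" "dec (c # s) = dec s @ layer c" "dec (p @ s) = dec s @ dec p"
  by (auto simp: dec_def)

lemma elems_simps: "elems [] = {}" "elems (c # s) = {y \<in> X. bit c (h y)} \<union> elems s"
  "elems (p @ s) = elems p \<union> elems s"
  by (auto simp: elems_def)

lemma good_append: "good (p @ r) \<Longrightarrow> good r"
  by (induction p) auto

lemma layer_A: "x \<in> X \<Longrightarrow> layer (set_bit (N + h x) d) = layer d"
  unfolding layer_def
proof (intro filter_cong refl)
  fix y assume "y \<in> set xs0"
  then have "N + h x \<noteq> h y" using hlt[of y] xs0 by auto
  then show "bit (set_bit (N + h x) d) (h y) = bit d (h y)" by (simp add: bit_set_bit_iff)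
qed

lemma dec_map_A: "x \<in> X \<Longrightarrow> dec (map (set_bit (N + h x)) p) = dec p"
  by (induction p) (auto simp: dec_simps layer_A)

lemma elems_A: "x \<in> X \<Longrightarrow> elems (map (set_bit (N + h x)) p) = elems p"
proof -
  have "y \<in> X \<Longrightarrow> bit (set_bit (N + h x) d) (h y) = bit d (h y)" for y d
    using hlt[of y] by (auto simp: bit_set_bit_iff)
  then show ?thesis by (auto simp: elems_def)
qed

lemma layer_L:
  assumes "x \<in> X" "\<not> bit c (h x)"
  shows "\<exists>u1 u2. layer c = u1 @ u2 \<and> layer (set_bit (h x) c) = u1 @ x # u2 \<and> set u1 \<subseteq> set (layer c)"
proof -
  obtain a b where ab: "xs0 = a @ x # b" using xs0 assms(1) by (metis split_list)
  have nx: "x \<notin> set a" "x \<notin> set b" using xs0(2) ab by auto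
  have sa: "set a \<subseteq> X" "set b \<subseteq> X" using xs0 ab by auto
  have fa: "filter (\<lambda>y. bit (set_bit (h x) c) (h y)) a = filter (\<lambda>y. bit c (h y)) a"
    using nx sa assms(1)
    by (intro filter_cong) (auto simp: bit_set_bit_iff inj_on_eq_iff[OF inj])
  have fb: "filter (\<lambda>y. bit (set_bit (h x) c) (h y)) b = filter (\<lambda>y. bit c (h y)) b"
    using nx sa assms(1)
    by (intro filter_cong) (auto simp: bit_set_bit_iff inj_on_eq_iff[OF inj])
  have l1: "layer c = filter (\<lambda>y. bit c (h y)) a @ filter (\<lambda>y. bit c (h y)) b"
    using assms(2) unfolding layer_def by (simp add: ab)
  have l2: "layer (set_bit (h x) c) = filter (\<lambda>y. bit c (h y)) a @ x # filter (\<lambda>y. bit c (h y)) b"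
  proof -
    have "layer (set_bit (h x) c) = filter (\<lambda>y. bit (set_bit (h x) c) (h y)) (a @ x # b)"
      unfolding layer_def by (simp add: ab)
    then show ?thesis using fa fb by (simp add: bit_set_bit_iff)
  qed
  show ?thesis using l1 l2 by (intro exI[of _ "filter (\<lambda>y. bit c (h y)) a"] exI[of _ "filter (\<lambda>y. bit c (h y)) b"]) simp
qed

lemma act_split:
  assumes "x \<in> X" "\<forall>d\<in>set p. hit x d" "\<not> hit x c"
  shows "act x (p @ c # s) = map (set_bit (N + h x)) p @ set_bit (h x) c # s"
  using assms(2) by (induction p) (auto simp: act_Cons assms(1,3))

lemma good_step:
  assumes "x \<in> X" "\<forall>d\<in>set p. hit x d" "\<not> hit x c" "good (p @ c # s)"
  shows "good (map (set_bit (N + h x)) p @ set_bit (h x) c # s)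
         \<and> elems (map (set_bit (N + h x)) p @ set_bit (h x) c # s) = elems (p @ c # s) \<union> {x}"
  using assms(2,4)
proof (induction p)
  case Nil
  have e: "elems [set_bit (h x) c] = elems [c] \<union> {x}"
  proof -
    have "y \<in> X \<Longrightarrow> bit (set_bit (h x) c) (h y) \<longleftrightarrow> bit c (h y) \<or> y = x" for y
      using inj_on_eq_iff[OF inj assms(1), of y] by (auto simp: bit_set_bit_iff)
    then show ?thesis using assms(1) unfolding elems_def by auto
  qed
  have "bit (set_bit (h x) c) (N + h y) = bit c (N + h y)" if "y \<in> X" for y
    using hlt[OF assms(1)] by (auto simp: bit_set_bit_iff)
  note NA = this
  have gcs: "good (c # s)" using Nil.prems by simp
  have ne: "\<not> (\<forall>y\<in>X. \<not> bit (set_bit (h x) c) (h y))"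
    using assms(1) by (auto simp: bit_set_bit_iff)
  have g1: "good (set_bit (h x) c # s)"
    using gcs NA ne by (simp only: good.simps) blast
  have e1: "elems (set_bit (h x) c # s) = elems [set_bit (h x) c] \<union> elems s"
    using elems_simps(3)[of "[set_bit (h x) c]" s] by simp
  have e3: "elems (c # s) = elems [c] \<union> elems s"
    using elems_simps(3)[of "[c]" s] by simp
  show ?case using g1 e1 e3 e by auto
next
  case (Cons d p)
  let ?r = "map (set_bit (N + h x)) p @ set_bit (h x) c # s"
  have IH: "good ?r" "elems ?r = elems (p @ c # s) \<union> {x}" using Cons by auto
  have gd: "\<forall>y\<in>X. bit d (N + h y) \<longleftrightarrow> y \<in> elems (p @ c # s)"
    "(\<forall>y\<in>X. \<not> bit d (h y)) \<longrightarrow> elems (p @ c # s) = {}" using Cons.prems by auto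
  have hd: "hit x d" using Cons.prems by auto
  have ne: "\<not> (\<forall>y\<in>X. \<not> bit d (h y))"
    using hd gd unfolding hit_def by auto
  have A: "bit (set_bit (N + h x) d) (N + h y) \<longleftrightarrow> y \<in> elems ?r" if "y \<in> X" for y
    using gd(1) that IH(2) inj_onD[OF inj, of y x] assms(1)
    by (auto simp: bit_set_bit_iff)
  have L: "bit (set_bit (N + h x) d) (h y) = bit d (h y)" if "y \<in> X" for y
    using hlt[OF that] by (auto simp: bit_set_bit_iff)
  have eq: "elems (map (set_bit (N + h x)) (d # p) @ set_bit (h x) c # s)
     = elems [d] \<union> elems ?r"
    using elems_A[OF assms(1), of "[d]"] elems_simps(3)[of "map (set_bit (N + h x)) [d]" ?r] by simp
  have ne2: "\<not> (\<forall>y\<in>X. \<not> bit (set_bit (N + h x) d) (h y))"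
    using ne L by simp
  have g1: "good (set_bit (N + h x) d # ?r)"
    using IH(1) A ne2 by (simp only: good.simps) blast
  have ed: "elems [d] = {y \<in> X. bit d (h y)}" by (simp add: elems_def)
  have e2: "elems ((d # p) @ c # s) = elems [d] \<union> elems (p @ c # s)"
    using elems_simps(3)[of "[d]" "p @ c # s"] by simp
  have Ls: "map (set_bit (N + h x)) (d # p) @ set_bit (h x) c # s = set_bit (N + h x) d # ?r"
    by simp
  have E: "elems (set_bit (N + h x) d # ?r) = elems ((d # p) @ c # s) \<union> {x}"
    using eq[unfolded Ls] IH(2) e2 by (simp only: Un_assoc)
  show ?case unfolding Ls using g1 E by (rule conjI)
qed

lemma dec_step:
  assumes "x \<in> X" "\<forall>d\<in>set p. hit x d" "\<not> hit x c" "good (p @ c # s)"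
  shows "trace_equiv R (dec (map (set_bit (N + h x)) p @ set_bit (h x) c # s)) (x # dec (p @ c # s))"
proof -
  have gcs: "good (c # s)" using good_append assms(4) by blast
  have nx: "\<not> bit c (h x)" using assms(1,3) unfolding hit_def dep_def by auto
  obtain u1 u2 where u: "layer c = u1 @ u2" "layer (set_bit (h x) c) = u1 @ x # u2"
    "set u1 \<subseteq> set (layer c)" using layer_L[OF assms(1) nx] by blast
  have indep: "\<forall>y\<in>set (dec s @ u1). (x, y) \<in> R \<or> (y, x) \<in> R"
  proof
    fix y assume "y \<in> set (dec s @ u1)"
    then have "y \<in> X \<and> (bit c (N + h y) \<or> bit c (h y))"
      using gcs u(3) by (auto simp: set_dec set_layer elems_def)
    then show "(x, y) \<in> R \<or> (y, x) \<in> R"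
      using assms(3) unfolding hit_def dep_def by auto
  qed
  have "trace_equiv R ([] @ (x # (dec s @ u1)) @ (u2 @ dec p)) ([] @ ((dec s @ u1) @ [x]) @ (u2 @ dec p))"
    by (rule trace_equiv_cong[OF trace_equiv_move[OF indep]])
  then have "trace_equiv R (x # dec (p @ c # s)) (dec (map (set_bit (N + h x)) p @ set_bit (h x) c # s))"
    using u by (simp add: dec_simps dec_map_A[OF assms(1)])
  then show ?thesis by (rule trace_equiv_sym)
qed

lemma exists_empty:
  "good cfg \<Longrightarrow> length (dec cfg) < length cfg \<Longrightarrow>
   \<exists>c\<in>set cfg. \<forall>y\<in>X. \<not> bit c (h y) \<and> \<not> bit c (N + h y)"
proof (induction cfg)
  case Nil then show ?case by simp
next
  case (Cons c s)
  show ?case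
  proof (cases "\<forall>y\<in>X. \<not> bit c (h y)")
    case True
    then show ?thesis using Cons.prems by auto
  next
    case False
    then obtain y where "y \<in> X" "bit c (h y)" by auto
    then have "y \<in> set (layer c)" by (simp add: set_layer)
    then have "length (layer c) \<ge> 1" by (cases "layer c") auto
    then have "length (dec s) < length s" using Cons.prems by (simp add: dec_simps)
    then show ?thesis using Cons by auto
  qed
qed

lemma good_replicate: "good (replicate m 0)"
proof -
  have "elems (replicate m 0) = {}" by (auto simp: elems_def)
  then show ?thesis by (induction m) (auto simp: elems_def)
qed

lemma main_inv:
  assumes "w \<in> lists X" "length w < m"
  shows "good (foldr act w (replicate m 0)) \<and>
         trace_equiv R (dec (foldr act w (replicate m 0))) w \<and>
         length (foldr act w (replicate m 0)) = m"
  using assms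
proof (induction w)
  case Nil
  have "dec (replicate m 0) = []" by (induction m) (auto simp: dec_simps layer_def)
  then show ?case by (simp add: good_replicate trace_equiv_refl)
next
  case (Cons x w)
  let ?cfg = "foldr act w (replicate m 0)"
  have IH: "good ?cfg" "trace_equiv R (dec ?cfg) w" "length ?cfg = m" using Cons by auto
  have x: "x \<in> X" using Cons by auto
  have "length (dec ?cfg) = length w" using trace_equiv_length[OF IH(2)] .
  then have "length (dec ?cfg) < length ?cfg" using Cons.prems IH(3) by simp
  then obtain c0 where "c0 \<in> set ?cfg" "\<forall>y\<in>X. \<not> bit c0 (h y) \<and> \<not> bit c0 (N + h y)"
    using exists_empty IH(1) by blast
  then have "\<exists>c\<in>set ?cfg. \<not> hit x c" unfolding hit_def by auto
  then obtain p c s where pcs: "?cfg = p @ c # s" "\<not> hit x c" "\<forall>d\<in>set p. \<not> \<not> hit x d"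
    using split_list_first_prop[of ?cfg "\<lambda>c. \<not> hit x c"] by blast
  have gs: "good (p @ c # s)" using IH(1) pcs(1) by simp
  have act_eq: "foldr act (x # w) (replicate m 0) = map (set_bit (N + h x)) p @ set_bit (h x) c # s"
    using act_split[OF x _ pcs(2)] pcs by simp
  have "trace_equiv R (dec (foldr act (x # w) (replicate m 0))) (x # dec ?cfg)"
    using dec_step[OF x _ pcs(2) gs] pcs act_eq by simp
  moreover have "trace_equiv R ([x] @ dec ?cfg @ []) ([x] @ w @ [])"
    by (rule trace_equiv_cong[OF IH(2)])
  ultimately have "trace_equiv R (dec (foldr act (x # w) (replicate m 0))) (x # w)"
    by (auto intro: trace_equiv_trans)
  moreover have "good (foldr act (x # w) (replicate m 0))"
    using good_step[OF x _ pcs(2) gs] pcs act_eq by simp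
  moreover have "length (foldr act (x # w) (replicate m 0)) = m"
    using IH(3) by (simp add: act_length)
  ultimately show ?case by blast
qed

end

theorem mainTheorem19:
  fixes X :: "'a set" and R :: "('a \<times> 'a) set"
  assumes "finite X" and "R \<subseteq> X \<times> X"
  shows "\<exists>Q Sig t out phi. is_automaton Q Sig t out \<and>
           is_fpcm_iso X R (automaton_semigroup Q Sig t out) (compose (lists Sig)) phi"
proof -
  obtain h where bij: "bij_betw h X {0..<card X}"
    using ex_bij_betw_finite_nat[OF assms(1)] by blast
  obtain xs0 where xs0: "set xs0 = X" "distinct xs0"
    using finite_distinct_list[OF assms(1)] by blast
  interpret C: cfg_setup X R h "card X" xs0
    using bij assms(2) xs0 by unfold_locales auto
  define N where "N = card X"
  define Q where "Q = {0..N}"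
  define phi where "phi u = restrict (foldr C.act u) (lists C.Sig)" for u
  have autom: "is_automaton Q C.Sig C.tA C.oA"
    unfolding is_automaton_def
  proof (intro conjI ballI)
    show "finite Q" "finite C.Sig" by (auto simp: Q_def C.Sig_def)
  next
    fix q s assume q: "q \<in> Q" and s: "s \<in> C.Sig"
    show "C.tA q s \<in> Q" using q by (auto simp: C.tA_def Q_def)
    show "C.oA q s \<in> C.Sig"
    proof (cases "q = 0")
      case True then show ?thesis using s by (simp add: C.oA_def)
    next
      case False
      then have "C.g q \<in> X" using C.g_in q by (auto simp: Q_def N_def)
      then have "h (C.g q) < card X" by (rule C.hlt)
      then show ?thesis using s False
        by (auto simp: C.oA_def intro!: C.Sig_set_bit)
    qed
  qed
  have phi_app: "phi (u @ v) = compose (lists C.Sig) (phi u) (phi v)"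
    if "u \<in> lists X" "v \<in> lists X" for u v
  proof
    fix w show "phi (u @ v) w = compose (lists C.Sig) (phi u) (phi v) w"
      using C.foldr_act_Sig[OF that(2)] by (simp add: phi_def compose_def)
  qed
  have sf: "state_fun C.Sig C.tA C.oA q \<in> phi ` lists X" if "q \<in> Q" for q
  proof (cases "q = 0")
    case True
    have "state_fun C.Sig C.tA C.oA q = phi []"
      unfolding state_fun_def phi_def using True
      by (simp add: C.state_map_tA0 fun_eq_iff)
    moreover have "[] \<in> lists X" by simp
    ultimately show ?thesis by (rule image_eqI)
  next
    case False
    then have g: "C.g q \<in> X" "Suc (h (C.g q)) = q" using C.g_in that by (auto simp: Q_def N_def)
    have a0: "C.act (C.g q) = state_map C.tA C.oA q"
      unfolding C.act_def g(2) by (rule refl)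
    have "state_fun C.Sig C.tA C.oA q = phi [C.g q]"
      unfolding state_fun_def phi_def foldr_Cons foldr_Nil comp_id a0 by (rule refl)
    moreover have "[C.g q] \<in> lists X" using g(1) by simp
    ultimately show ?thesis by (rule image_eqI)
  qed
  have S1: "f \<in> phi ` lists X" if "f \<in> automaton_semigroup Q C.Sig C.tA C.oA" for f
    using that
  proof (induction rule: automaton_semigroup.induct)
    case (gen q) then show ?case by (rule sf)
  next
    case (comp f g)
    then obtain u v where uv: "u \<in> lists X" "v \<in> lists X" "f = phi u" "g = phi v"
      by (meson imageE)
    have "compose (lists C.Sig) f g = phi (u @ v)" using phi_app[OF uv(1,2)] uv(3,4) by simp
    moreover have "u @ v \<in> lists X" using uv(1,2) by simp
    ultimately show ?case by (rule image_eqI)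
  qed
  have S2: "phi u \<in> automaton_semigroup Q C.Sig C.tA C.oA" if "u \<in> lists X" for u
    using that
  proof (induction u)
    case Nil
    have "state_fun C.Sig C.tA C.oA 0 = phi []"
      unfolding state_fun_def phi_def by (simp add: C.state_map_tA0 fun_eq_iff)
    moreover have "0 \<in> Q" by (simp add: Q_def)
    then have "state_fun C.Sig C.tA C.oA 0 \<in> automaton_semigroup Q C.Sig C.tA C.oA"
      by (rule automaton_semigroup.gen)
    ultimately show ?case by simp
  next
    case (Cons x u)
    then have x: "x \<in> X" "u \<in> lists X" by auto
    have "state_fun C.Sig C.tA C.oA (Suc (h x)) = phi [x]"
      unfolding state_fun_def phi_def foldr_Cons foldr_Nil comp_id C.act_def by (rule refl)
    moreover have "Suc (h x) \<in> Q" using C.hlt[OF x(1)] by (simp add: Q_def N_def)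
    ultimately have "phi [x] \<in> automaton_semigroup Q C.Sig C.tA C.oA"
      by (metis automaton_semigroup.gen)
    then show ?case using phi_app[of "[x]" u] x Cons
      by (metis append_Cons append_Nil automaton_semigroup.comp lists.simps)
  qed
  have inj: "phi u = phi v \<longleftrightarrow> trace_equiv R u v" if "u \<in> lists X" "v \<in> lists X" for u v
  proof
    assume "trace_equiv R u v"
    then show "phi u = phi v" unfolding phi_def using C.foldr_act_equiv by simp
  next
    assume eq: "phi u = phi v"
    define m where "m = length u + length v + 1"
    have r: "replicate m 0 \<in> lists C.Sig" by (auto simp: C.Sig_def)
    have "foldr C.act u (replicate m 0) = foldr C.act v (replicate m 0)"
      using fun_cong[OF eq, of "replicate m 0"] r by (simp add: phi_def)
    moreover have "trace_equiv R (C.dec (foldr C.act u (replicate m 0))) u"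
      using C.main_inv[OF that(1), of m] by (simp add: m_def)
    moreover have "trace_equiv R (C.dec (foldr C.act v (replicate m 0))) v"
      using C.main_inv[OF that(2), of m] by (simp add: m_def)
    ultimately show "trace_equiv R u v"
      by (metis trace_equiv_sym trace_equiv_trans)
  qed
  have im: "phi ` lists X = automaton_semigroup Q C.Sig C.tA C.oA"
  proof
    show "phi ` lists X \<subseteq> automaton_semigroup Q C.Sig C.tA C.oA" using S2 by (rule image_subsetI)
    show "automaton_semigroup Q C.Sig C.tA C.oA \<subseteq> phi ` lists X" using S1 by (rule subsetI)
  qed
  have "is_fpcm_iso X R (automaton_semigroup Q C.Sig C.tA C.oA) (compose (lists C.Sig)) phi"
    unfolding is_fpcm_iso_def using im inj phi_app by (intro conjI ballI) auto
  then show ?thesis using autom by blast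
qed

end
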